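(* Let $N,k\ge 10$, let $L\subseteq Nk\mathbb{Z}^d$, and let $\gamma\in\mathbb{Z}^d$ with $0\le\gamma_i<k$ for all $i\le d$. Set $A=\bigcup_{\beta\in L}\big(\beta+[0,Nk)^d\big)$ and $B=\bigcup_{\beta\in L}\big(\beta+\gamma+[-3k,(N+3)k)^d\big)$ (intervals of integers). Then $B\setminus A$ can be tiled by almost $k$-boxes.
   Context: A box in $\mathbb{Z}^d$ is a product of integer intervals. An almost $k$-box is a box all of whose side lengths lie between $k$ and $2k$ and at most one of whose side lengths differs from $k$. A set is tiled by a family of boxes if it is partitioned into translates of boxes from that family. *)

theory Defs
  imports "HOL-Analysis.Analysis"
begin

text \<open>Points of Z^d are represented as int ^ 'd for a finite index type 'd.
  The box with lower corner a and side-length vector s is the product of the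
  integer intervals [a_i, a_i + s_i).\<close>

definition box_at :: "int ^ 'd \<Rightarrow> int ^ 'd \<Rightarrow> (int ^ 'd) set" where
  "box_at a s = {x. \<forall>i. a $ i \<le> x $ i \<and> x $ i < a $ i + s $ i}"

definition almost_k_shape :: "int \<Rightarrow> int ^ 'd \<Rightarrow> bool" where
  "almost_k_shape k s \<longleftrightarrow> (\<forall>i. k \<le> s $ i \<and> s $ i \<le> 2 * k) \<and> card {i. s $ i \<noteq> k} \<le> 1"

definition almost_k_box :: "int \<Rightarrow> (int ^ 'd) set \<Rightarrow> bool" where
  "almost_k_box k P \<longleftrightarrow> (\<exists>a s. almost_k_shape k s \<and> P = box_at a s)"

definition tiled_by_almost_k_boxes :: "int \<Rightarrow> (int ^ 'd) set \<Rightarrow> bool" where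
  "tiled_by_almost_k_boxes k S \<longleftrightarrow>
     (\<exists>T. (\<forall>P\<in>T. almost_k_box k P) \<and> pairwise disjnt T \<and> \<Union>T = S)"

end

theory Submission imports Defs begin

definition pcell :: "int \<Rightarrow> int \<Rightarrow> (int \<Rightarrow> int) \<Rightarrow> (int \<Rightarrow> int) \<Rightarrow> int \<Rightarrow> int \<times> int" where
  "pcell P off rs rl y = (off + P * ((y - off) div P) + rs ((y - off) mod P), rl ((y - off) mod P))"

lemma divmod_unique_int:
  fixes P q r :: int
  assumes "0 \<le> r" "r < P"
  shows "(P * q + r) div P = q \<and> (P * q + r) mod P = r"
  using assms by (simp add: div_pos_pos_trivial mod_pos_pos_trivial add.commute)

lemma pcell_mem:
  fixes P off :: int
  assumes P: "0 < P" and R1: "\<And>r. 0 \<le> r \<Longrightarrow> r < P \<Longrightarrow> rs r \<le> r \<and> r < rs r + rl r"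
  shows "fst (pcell P off rs rl y) \<le> y \<and> y < fst (pcell P off rs rl y) + snd (pcell P off rs rl y)"
proof -
  define q where "q = (y - off) div P"
  define r where "r = (y - off) mod P"
  have e: "P * q + r = y - off" unfolding q_def r_def by (rule mult_div_mod_eq)
  have "0 \<le> r" "r < P" using P unfolding r_def by auto
  then have "rs r \<le> r \<and> r < rs r + rl r" using R1 by blast
  then show ?thesis using e by (simp add: pcell_def q_def[symmetric] r_def[symmetric])
qed

lemma pcell_const:
  fixes P off :: int
  assumes P: "0 < P"
    and R2: "\<And>r r'. 0 \<le> r \<Longrightarrow> r < P \<Longrightarrow> rs r \<le> r' \<Longrightarrow> r' < rs r + rl r \<Longrightarrow> rs r' = rs r \<and> rl r' = rl r"
    and Rb: "\<And>r. 0 \<le> r \<Longrightarrow> r < P \<Longrightarrow> 0 \<le> rs r \<and> rs r + rl r \<le> P"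
    and y1: "fst (pcell P off rs rl y) \<le> y'" and y2: "y' < fst (pcell P off rs rl y) + snd (pcell P off rs rl y)"
  shows "pcell P off rs rl y' = pcell P off rs rl y"
proof -
  define q where "q = (y - off) div P"
  define r where "r = (y - off) mod P"
  have r0: "0 \<le> r" "r < P" using P unfolding r_def by auto
  define r' where "r' = y' - off - P * q"
  have st: "fst (pcell P off rs rl y) = off + P * q + rs r" "snd (pcell P off rs rl y) = rl r"
    by (simp_all add: pcell_def q_def r_def)
  have b: "0 \<le> rs r" "rs r + rl r \<le> P" using Rb r0 by auto
  have r'1: "rs r \<le> r'" "r' < rs r + rl r" using y1 y2 st unfolding r'_def by auto
  have r'2: "0 \<le> r'" "r' < P" using r'1 b by auto
  have "y' - off = P * q + r'" unfolding r'_def by simp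
  then have dm: "(y' - off) div P = q" "(y' - off) mod P = r'" using divmod_unique_int[OF r'2] by auto
  have "rs r' = rs r \<and> rl r' = rl r" using R2 r0 r'1 by blast
  then show ?thesis using dm by (simp add: pcell_def q_def r_def)
qed

lemma pcell_bound:
  fixes P off :: int
  assumes P: "0 < P"
    and Rb: "\<And>r. 0 \<le> r \<Longrightarrow> r < P \<Longrightarrow> 0 \<le> rs r \<and> rs r + rl r \<le> P"
    and bz: "0 \<le> bz" "bz \<le> P" and Rc: "\<And>r. 0 \<le> r \<Longrightarrow> r < P \<Longrightarrow> bz \<le> rs r \<or> rs r + rl r \<le> bz"
    and bd: "b = off + P * m + bz"
  shows "b \<le> fst (pcell P off rs rl y) \<or> fst (pcell P off rs rl y) + snd (pcell P off rs rl y) \<le> b"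
proof -
  define q where "q = (y - off) div P"
  define r where "r = (y - off) mod P"
  have r0: "0 \<le> r" "r < P" using P unfolding r_def by auto
  have st: "fst (pcell P off rs rl y) = off + P * q + rs r" "snd (pcell P off rs rl y) = rl r"
    by (simp_all add: pcell_def q_def r_def)
  have b: "0 \<le> rs r" "rs r + rl r \<le> P" using Rb r0 by auto
  consider "m < q" | "m = q" | "q < m" by linarith
  then show ?thesis
  proof cases
    case 1
    then have "P * (m + 1) \<le> P * q" using P by (intro mult_left_mono) auto
    then show ?thesis using st b bz bd by (simp add: algebra_simps)
  next
    case 2
    then show ?thesis using st bd Rc[OF r0] by auto
  next
    case 3
    then have "P * (q + 1) \<le> P * m" using P by (intro mult_left_mono) auto
    then show ?thesis using st b bz bd by (simp add: algebra_simps)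
  qed
qed

lemma respect_interval:
  fixes s l y y' a b :: int
  assumes "a \<le> s \<or> s + l \<le> a" "b \<le> s \<or> s + l \<le> b" "s \<le> y" "y < s + l" "s \<le> y'" "y' < s + l"
  shows "(a \<le> y \<and> y < b) \<longleftrightarrow> (a \<le> y' \<and> y' < b)"
  using assms by linarith


definition mrs :: "int \<Rightarrow> int \<Rightarrow> int \<Rightarrow> int" where
  "mrs k g r = (if r < k then 0 else if r < 3*k-g then k else if r < 4*k-g then 3*k-g
     else if r < 5*k-g then 4*k-g else if r < 6*k then 5*k-g else 6*k + k*((r-6*k) div k))"

definition mrl :: "int \<Rightarrow> int \<Rightarrow> int \<Rightarrow> int" where
  "mrl k g r = (if r < k then k else if r < 3*k-g then 2*k-g else if r < 4*k-g then k
     else if r < 5*k-g then k else if r < 6*k then k+g else k)"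

lemma last_piece:
  fixes k r :: int
  assumes k: "0 < k" and r: "6*k \<le> r"
  shows "6*k \<le> 6*k + k*((r-6*k) div k) \<and> 6*k + k*((r-6*k) div k) \<le> r \<and> r < 6*k + k*((r-6*k) div k) + k"
proof -
  define q where "q = (r-6*k) div k"
  define m where "m = (r-6*k) mod k"
  have e: "k*q + m = r - 6*k" unfolding q_def m_def by (rule mult_div_mod_eq)
  have m: "0 \<le> m" "m < k" using k unfolding m_def by auto
  have "0 \<le> q" unfolding q_def using k r by (simp add: pos_imp_zdiv_nonneg_iff)
  then have "0 \<le> k*q" using k by simp
  then show ?thesis using e m by (simp add: q_def[symmetric])
qed

lemma M1:
  fixes N k g r :: int
  assumes N: "10 \<le> N" and k: "10 \<le> k" and g: "0 \<le> g" "g < k" and r: "0 \<le> r" "r < N*k"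
  shows "0 \<le> mrs k g r \<and> mrs k g r \<le> r \<and> r < mrs k g r + mrl k g r \<and> mrs k g r + mrl k g r \<le> N*k
     \<and> k \<le> mrl k g r \<and> mrl k g r \<le> 2*k"
proof (cases "r < 6*k")
  case True
  have h: "10*k \<le> N*k" using N k by (intro mult_right_mono) auto
  show ?thesis using True g r k N apply (auto simp: mrs_def mrl_def) using h N by linarith+
next
  case False
  define q where "q = (r-6*k) div k"
  have lp: "6*k \<le> 6*k + k*q \<and> 6*k + k*q \<le> r \<and> r < 6*k + k*q + k"
    using last_piece[of k r] False k unfolding q_def by auto
  have "k*(6+q) < k*N" using lp r by (simp add: algebra_simps)
  then have "6+q < N" using k by (simp add: mult_less_cancel_left)
  then have "k*(6+q+1) \<le> k*N" using k by (intro mult_left_mono) auto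
  then have "6*k + k*q + k \<le> N*k" by (simp add: algebra_simps)
  moreover have "mrs k g r = 6*k + k*q" "mrl k g r = k" using False g
    by (auto simp: mrs_def mrl_def q_def)
  ultimately show ?thesis using lp k by auto
qed

lemma M2:
  fixes N k g r r' :: int
  assumes N: "10 \<le> N" and k: "10 \<le> k" and g: "0 \<le> g" "g < k" and r: "0 \<le> r" "r < N*k"
    and r': "mrs k g r \<le> r'" "r' < mrs k g r + mrl k g r"
  shows "mrs k g r' = mrs k g r \<and> mrl k g r' = mrl k g r"
proof (cases "r < 6*k")
  case True
  then show ?thesis using r r' g k by (auto simp: mrs_def mrl_def split: if_splits)
next
  case False
  define q where "q = (r-6*k) div k"
  have lp: "6*k \<le> 6*k + k*q \<and> 6*k + k*q \<le> r \<and> r < 6*k + k*q + k"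
    using last_piece[of k r] False k unfolding q_def by auto
  have st: "mrs k g r = 6*k + k*q" "mrl k g r = k" using False g
    by (auto simp: mrs_def mrl_def q_def)
  have "r' - 6*k = k*q + (r' - 6*k - k*q)" by simp
  moreover have "0 \<le> r' - 6*k - k*q" "r' - 6*k - k*q < k" using r' st by auto
  ultimately have "(r' - 6*k) div k = q" using divmod_unique_int[of "r' - 6*k - k*q" k q] by metis
  moreover have "\<not> r' < 6*k" using r' st lp by auto
  ultimately show ?thesis using st g by (auto simp: mrs_def mrl_def)
qed

lemma M3:
  fixes N k g r b0 :: int
  assumes N: "10 \<le> N" and k: "10 \<le> k" and g: "0 \<le> g" "g < k" and r: "0 \<le> r" "r < N*k"
    and b0: "b0 = 3*k-g \<or> b0 = 6*k"
  shows "b0 \<le> mrs k g r \<or> mrs k g r + mrl k g r \<le> b0"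
proof (cases "r < 6*k")
  case True
  then show ?thesis using r g k b0 by (auto simp: mrs_def mrl_def)
next
  case False
  then show ?thesis using last_piece[of k r] g k b0 by (auto simp: mrs_def mrl_def)
qed


definition Fc :: "int \<Rightarrow> int \<Rightarrow> int \<times> int" where "Fc k y = pcell k 0 (\<lambda>_. 0) (\<lambda>_. k) y"
definition Gc :: "int \<Rightarrow> int \<Rightarrow> int \<Rightarrow> int \<times> int" where "Gc k g y = pcell k g (\<lambda>_. 0) (\<lambda>_. k) y"
definition Mc :: "int \<Rightarrow> int \<Rightarrow> int \<Rightarrow> int \<Rightarrow> int \<times> int" where
  "Mc N k g y = pcell (N*k) (g - 3*k) (mrs k g) (mrl k g) y"

lemma Fc_props:
  fixes N k :: int
  assumes k: "10 \<le> k"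
  shows "fst (Fc k y) \<le> y \<and> y < fst (Fc k y) + snd (Fc k y)" "snd (Fc k y) = k"
    and "fst (Fc k y) \<le> y' \<Longrightarrow> y' < fst (Fc k y) + snd (Fc k y) \<Longrightarrow> Fc k y' = Fc k y"
    and "b = k * m \<Longrightarrow> b \<le> fst (Fc k y) \<or> fst (Fc k y) + snd (Fc k y) \<le> b"
proof -
  have P: "0 < k" using k by simp
  show "fst (Fc k y) \<le> y \<and> y < fst (Fc k y) + snd (Fc k y)" unfolding Fc_def
    by (rule pcell_mem[OF P]) auto
  show "snd (Fc k y) = k" by (simp add: Fc_def pcell_def)
  show "fst (Fc k y) \<le> y' \<Longrightarrow> y' < fst (Fc k y) + snd (Fc k y) \<Longrightarrow> Fc k y' = Fc k y" unfolding Fc_def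
    by (rule pcell_const[OF P]) auto
  show "b = k * m \<Longrightarrow> b \<le> fst (Fc k y) \<or> fst (Fc k y) + snd (Fc k y) \<le> b" unfolding Fc_def
    using pcell_bound[OF P, where bz=0 and m=m and rs="\<lambda>_. 0" and rl="\<lambda>_. k" and off=0 and b=b and y=y] P by auto
qed

lemma Gc_props:
  fixes N k :: int
  assumes k: "10 \<le> k"
  shows "fst (Gc k g y) \<le> y \<and> y < fst (Gc k g y) + snd (Gc k g y)" "snd (Gc k g y) = k"
    and "fst (Gc k g y) \<le> y' \<Longrightarrow> y' < fst (Gc k g y) + snd (Gc k g y) \<Longrightarrow> Gc k g y' = Gc k g y"
    and "b = g + k * m \<Longrightarrow> b \<le> fst (Gc k g y) \<or> fst (Gc k g y) + snd (Gc k g y) \<le> b"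
proof -
  have P: "0 < k" using k by simp
  show "fst (Gc k g y) \<le> y \<and> y < fst (Gc k g y) + snd (Gc k g y)" unfolding Gc_def
    by (rule pcell_mem[OF P]) auto
  show "snd (Gc k g y) = k" by (simp add: Gc_def pcell_def)
  show "fst (Gc k g y) \<le> y' \<Longrightarrow> y' < fst (Gc k g y) + snd (Gc k g y) \<Longrightarrow> Gc k g y' = Gc k g y" unfolding Gc_def
    by (rule pcell_const[OF P]) auto
  show "b = g + k * m \<Longrightarrow> b \<le> fst (Gc k g y) \<or> fst (Gc k g y) + snd (Gc k g y) \<le> b" unfolding Gc_def
    using pcell_bound[OF P, where bz=0 and m=m and rs="\<lambda>_. 0" and rl="\<lambda>_. k" and off=g and b=b and y=y] P by auto
qed

lemma Mc_props:
  fixes N k g :: int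
  assumes N: "10 \<le> N" and k: "10 \<le> k" and g: "0 \<le> g" "g < k"
  shows "fst (Mc N k g y) \<le> y \<and> y < fst (Mc N k g y) + snd (Mc N k g y)"
    and "k \<le> snd (Mc N k g y) \<and> snd (Mc N k g y) \<le> 2*k"
    and "fst (Mc N k g y) \<le> y' \<Longrightarrow> y' < fst (Mc N k g y) + snd (Mc N k g y) \<Longrightarrow> Mc N k g y' = Mc N k g y"
    and "b = (g - 3*k) + (N*k) * m + b0 \<Longrightarrow> b0 = 0 \<or> b0 = 3*k-g \<or> b0 = 6*k \<Longrightarrow>
        b \<le> fst (Mc N k g y) \<or> fst (Mc N k g y) + snd (Mc N k g y) \<le> b"
proof -
  have P: "0 < N*k" using k N by simp
  have h: "10*k \<le> N*k" using N k by (intro mult_right_mono) auto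
  note m1 = M1[OF N k g]
  show "fst (Mc N k g y) \<le> y \<and> y < fst (Mc N k g y) + snd (Mc N k g y)" unfolding Mc_def
    by (rule pcell_mem[OF P]) (use m1 in blast)
  show "k \<le> snd (Mc N k g y) \<and> snd (Mc N k g y) \<le> 2*k"
    using m1[of "(y - (g - 3*k)) mod (N*k)"] P by (simp add: Mc_def pcell_def)
  show "fst (Mc N k g y) \<le> y' \<Longrightarrow> y' < fst (Mc N k g y) + snd (Mc N k g y) \<Longrightarrow> Mc N k g y' = Mc N k g y" unfolding Mc_def
  proof (rule pcell_const[OF P])
    fix r r' assume "0 \<le> r" "r < N*k" "mrs k g r \<le> r'" "r' < mrs k g r + mrl k g r"
    then show "mrs k g r' = mrs k g r \<and> mrl k g r' = mrl k g r" by (rule M2[OF N k g])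
  next
    fix r :: int assume "0 \<le> r" "r < N*k"
    then show "0 \<le> mrs k g r \<and> mrs k g r + mrl k g r \<le> N*k" using m1 by blast
  qed
  show "b = (g - 3*k) + (N*k) * m + b0 \<Longrightarrow> b0 = 0 \<or> b0 = 3*k-g \<or> b0 = 6*k \<Longrightarrow>
        b \<le> fst (Mc N k g y) \<or> fst (Mc N k g y) + snd (Mc N k g y) \<le> b"
  proof -
    assume b: "b = (g - 3*k) + (N*k) * m + b0" and b0: "b0 = 0 \<or> b0 = 3*k-g \<or> b0 = 6*k"
    show "b \<le> fst (Mc N k g y) \<or> fst (Mc N k g y) + snd (Mc N k g y) \<le> b"
    proof -
      have Rb: "0 \<le> mrs k g r \<and> mrs k g r + mrl k g r \<le> N*k" if "0 \<le> r" "r < N*k" for r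
        using m1[OF that] by blast
      have Rc: "b0 \<le> mrs k g r \<or> mrs k g r + mrl k g r \<le> b0" if "0 \<le> r" "r < N*k" for r
        using b0 M3[OF N k g that] m1[OF that] by blast
      have "0 \<le> b0" "b0 \<le> N*k" using b0 h g k by (elim disjE; linarith)+
      note pcell_bound[where rs="mrs k g" and rl="mrl k g" and bz=b0, OF P Rb this(1) this(2) Rc b]
      then show ?thesis unfolding Mc_def by blast
    qed
  qed
qed


definition cellf :: "int \<Rightarrow> int \<Rightarrow> int ^ 'd \<Rightarrow> ('d \<Rightarrow> nat) \<Rightarrow> nat \<Rightarrow> 'd \<Rightarrow> int \<Rightarrow> int \<times> int" where
  "cellf N k \<gamma> f u j y = (if f j < u then Fc k y else if f j = u then Mc N k (\<gamma>$j) y else Gc k (\<gamma>$j) y)"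

definition cnd :: "int \<Rightarrow> int \<Rightarrow> int ^ 'd \<Rightarrow> ('d \<Rightarrow> nat) \<Rightarrow> nat \<Rightarrow> int \<Rightarrow> 'd \<Rightarrow> int \<Rightarrow> bool" where
  "cnd N k \<gamma> f t b j y = (if f j < t then b \<le> y \<and> y < b + N*k
      else b + \<gamma>$j - 3*k \<le> y \<and> y < b + \<gamma>$j + (N+3)*k)"

lemma cf_props:
  fixes N k :: int and \<gamma> :: "int ^ 'd"
  assumes N: "10 \<le> N" and k: "10 \<le> k" and g: "0 \<le> \<gamma>$j" "\<gamma>$j < k"
  shows "fst (cellf N k \<gamma> f u j y) \<le> y \<and> y < fst (cellf N k \<gamma> f u j y) + snd (cellf N k \<gamma> f u j y)"
    and "k \<le> snd (cellf N k \<gamma> f u j y) \<and> snd (cellf N k \<gamma> f u j y) \<le> 2*k"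
    and "f j \<noteq> u \<Longrightarrow> snd (cellf N k \<gamma> f u j y) = k"
    and "fst (cellf N k \<gamma> f u j y) \<le> y' \<Longrightarrow> y' < fst (cellf N k \<gamma> f u j y) + snd (cellf N k \<gamma> f u j y)
         \<Longrightarrow> cellf N k \<gamma> f u j y' = cellf N k \<gamma> f u j y"
    and "(N*k) dvd b \<Longrightarrow> fst (cellf N k \<gamma> f u j y) \<le> y' \<Longrightarrow> y' < fst (cellf N k \<gamma> f u j y) + snd (cellf N k \<gamma> f u j y)
         \<Longrightarrow> t = u \<or> t = Suc u \<Longrightarrow> cnd N k \<gamma> f t b j y = cnd N k \<gamma> f t b j y'"
proof -
  note F = Fc_props[OF k] and G = Gc_props[OF k] and M = Mc_props[OF N k g]
  show "fst (cellf N k \<gamma> f u j y) \<le> y \<and> y < fst (cellf N k \<gamma> f u j y) + snd (cellf N k \<gamma> f u j y)"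
    using F(1) G(1) M(1) by (simp add: cellf_def)
  show "k \<le> snd (cellf N k \<gamma> f u j y) \<and> snd (cellf N k \<gamma> f u j y) \<le> 2*k"
    using F(2) G(2) M(2) k by (simp add: cellf_def)
  show "f j \<noteq> u \<Longrightarrow> snd (cellf N k \<gamma> f u j y) = k"
    using F(2) G(2) by (simp add: cellf_def)
  show "fst (cellf N k \<gamma> f u j y) \<le> y' \<Longrightarrow> y' < fst (cellf N k \<gamma> f u j y) + snd (cellf N k \<gamma> f u j y)
         \<Longrightarrow> cellf N k \<gamma> f u j y' = cellf N k \<gamma> f u j y"
  proof -
    assume a: "fst (cellf N k \<gamma> f u j y) \<le> y'" "y' < fst (cellf N k \<gamma> f u j y) + snd (cellf N k \<gamma> f u j y)"
    consider "f j < u" | "f j = u" | "u < f j" by linarith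
    then show ?thesis
    proof cases
      case 1 then show ?thesis using a F(3)[of y y'] by (simp add: cellf_def)
    next
      case 2 then show ?thesis using a M(3)[of y y'] by (simp add: cellf_def)
    next
      case 3 then show ?thesis using a G(3)[of "\<gamma>$j" y y'] by (simp add: cellf_def)
    qed
  qed
  assume dv: "(N*k) dvd b" and y1: "fst (cellf N k \<gamma> f u j y) \<le> y'"
    and y2: "y' < fst (cellf N k \<gamma> f u j y) + snd (cellf N k \<gamma> f u j y)" and t: "t = u \<or> t = Suc u"
  obtain c where c: "b = N*k*c" using dv by blast
  let ?g = "\<gamma>$j"
  have ym: "fst (cellf N k \<gamma> f u j y) \<le> y \<and> y < fst (cellf N k \<gamma> f u j y) + snd (cellf N k \<gamma> f u j y)"
    using F(1) G(1) M(1) by (simp add: cellf_def)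
  consider "f j < u" | "f j = u" | "u < f j" by linarith
  then show "cnd N k \<gamma> f t b j y = cnd N k \<gamma> f t b j y'"
  proof cases
    case 1
    then have ft: "f j < t" using t by auto
    have e1: "b = k * (N*c)" "b + N*k = k*(N*c+N)" using c by (simp_all add: algebra_simps)
    have "(b \<le> y \<and> y < b + N*k) = (b \<le> y' \<and> y' < b + N*k)"
      apply (rule respect_interval[where s="fst (Fc k y)" and l="snd (Fc k y)"])
      using F(4)[OF e1(1)] F(4)[OF e1(2)] ym y1 y2 1 by (simp_all add: cellf_def)
    then show ?thesis using ft by (simp add: cnd_def)
  next
    case 2
    have e1: "b = (?g - 3*k) + (N*k)*c + (3*k - ?g)" "b + N*k = (?g - 3*k) + (N*k)*(c+1) + (3*k - ?g)"
      "b + ?g - 3*k = (?g - 3*k) + (N*k)*c + 0" "b + ?g + (N+3)*k = (?g - 3*k) + (N*k)*(c+1) + 6*k"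
      using c by (simp_all add: algebra_simps)
    have A: "(b \<le> y \<and> y < b + N*k) = (b \<le> y' \<and> y' < b + N*k)"
      apply (rule respect_interval[where s="fst (Mc N k ?g y)" and l="snd (Mc N k ?g y)"])
      using M(4)[OF e1(1)] M(4)[OF e1(2)] ym y1 y2 2 by (simp_all add: cellf_def)
    have B: "(b + ?g - 3*k \<le> y \<and> y < b + ?g + (N+3)*k) = (b + ?g - 3*k \<le> y' \<and> y' < b + ?g + (N+3)*k)"
      apply (rule respect_interval[where s="fst (Mc N k ?g y)" and l="snd (Mc N k ?g y)"])
      using M(4)[OF e1(3)] M(4)[OF e1(4)] ym y1 y2 2 by (simp_all add: cellf_def)
    show ?thesis using A B t 2 by (auto simp: cnd_def)
  next
    case 3
    then have ft: "\<not> f j < t" using t by auto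
    have e1: "b + ?g - 3*k = ?g + k*(N*c - 3)" "b + ?g + (N+3)*k = ?g + k*(N*c+N+3)"
      using c by (simp_all add: algebra_simps)
    have "(b + ?g - 3*k \<le> y \<and> y < b + ?g + (N+3)*k) = (b + ?g - 3*k \<le> y' \<and> y' < b + ?g + (N+3)*k)"
      apply (rule respect_interval[where s="fst (Gc k ?g y)" and l="snd (Gc k ?g y)"])
      using G(4)[OF e1(1)] G(4)[OF e1(2)] ym y1 y2 3 by (simp_all add: cellf_def)
    then show ?thesis using ft by (simp add: cnd_def)
  qed
qed


lemma find_step:
  assumes "P 0" "\<not> P n"
  shows "\<exists>u<n. P u \<and> \<not> P (Suc u)"
  using assms
proof (induction n)
  case 0 then show ?case by simp
next
  case (Suc n)
  then show ?case by (cases "P n") (auto intro: less_SucI)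
qed

theorem lemma6p1:
  fixes N k :: int and L :: "(int ^ 'd) set" and \<gamma> :: "int ^ 'd"
  assumes "N \<ge> 10" and "k \<ge> 10"
    and "\<forall>\<beta>\<in>L. \<forall>i. (N * k) dvd \<beta> $ i"
    and "\<forall>i. 0 \<le> \<gamma> $ i \<and> \<gamma> $ i < k"
  defines "A \<equiv> (\<Union>\<beta>\<in>L. {x. \<forall>i. \<beta> $ i \<le> x $ i \<and> x $ i < \<beta> $ i + N * k})"
    and "B \<equiv> (\<Union>\<beta>\<in>L. {x. \<forall>i. \<beta> $ i + \<gamma> $ i - 3 * k \<le> x $ i
                                  \<and> x $ i < \<beta> $ i + \<gamma> $ i + (N + 3) * k})"
  shows "tiled_by_almost_k_boxes k (B - A)"
proof -
  note N = assms(1) and k = assms(2) and dv = assms(3) and g = assms(4)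
  obtain f :: "'d \<Rightarrow> nat" where fb: "bij_betw f (UNIV :: 'd set) {0..<card (UNIV :: 'd set)}"
    using ex_bij_betw_finite_nat[of "UNIV :: 'd set"] by auto
  define n where "n = card (UNIV :: 'd set)"
  have finj: "inj f" using fb by (simp add: bij_betw_def)
  have fn: "\<And>i. f i < n" using fb unfolding n_def bij_betw_def by auto
  define H where "H t = (\<Union>\<beta>\<in>L. {x. \<forall>i. cnd N k \<gamma> f t (\<beta>$i) i (x$i)})" for t
  define cl where "cl u x j = cellf N k \<gamma> f u j (x$j)" for u x j
  define bx where "bx u x = box_at (\<chi> j. fst (cl u x j)) (\<chi> j. snd (cl u x j))" for u x
  define T where "T = {bx u x | u x. x \<in> H u \<and> x \<notin> H (Suc u)}"
  have e3: "(N+3)*k = N*k + 3*k" by (simp add: algebra_simps)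
  have H0: "H 0 = B" unfolding H_def B_def cnd_def by simp
  have Hn: "H n = A" unfolding H_def A_def cnd_def using fn by simp
  have Hmono: "H t \<subseteq> H s" if "s \<le> t" for s t
  proof
    fix x assume "x \<in> H t"
    then obtain \<beta> where b: "\<beta> \<in> L" "\<forall>i. cnd N k \<gamma> f t (\<beta>$i) i (x$i)" unfolding H_def by auto
    have "cnd N k \<gamma> f s (\<beta>$i) i (x$i)" for i
      using b(2)[rule_format, of i] g[rule_format, of i] that k e3 by (auto simp: cnd_def split: if_splits)
    then show "x \<in> H s" using b(1) unfolding H_def by auto
  qed
  have HB: "H t \<subseteq> B - {}" for t using Hmono[of 0 t] H0 by auto
  have HA: "A \<subseteq> H t" for t
  proof
    fix x assume "x \<in> A"
    then obtain \<beta> where b: "\<beta> \<in> L" "\<forall>i. \<beta> $ i \<le> x $ i \<and> x $ i < \<beta> $ i + N * k" unfolding A_def by auto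
    have "cnd N k \<gamma> f t (\<beta>$i) i (x$i)" for i
      using b(2)[rule_format, of i] g[rule_format, of i] k e3 by (auto simp: cnd_def)
    then show "x \<in> H t" using b(1) unfolding H_def by auto
  qed
  have inbx: "z \<in> bx u x \<longleftrightarrow> (\<forall>j. fst (cl u x j) \<le> z$j \<and> z$j < fst (cl u x j) + snd (cl u x j))" for z u x
    unfolding bx_def box_at_def by simp
  have memx: "x \<in> bx u x" for u x
    unfolding inbx cl_def using cf_props(1)[OF N k] g by blast
  have same: "bx u z = bx u x" if "z \<in> bx u x" for z u x
  proof -
    have "cl u z j = cl u x j" for j
      using that unfolding inbx cl_def using cf_props(4)[OF N k] g by blast
    then show ?thesis unfolding bx_def by simp
  qed
  have Hresp: "z \<in> H t \<longleftrightarrow> x \<in> H t" if "z \<in> bx u x" "t = u \<or> t = Suc u" for z u x t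
  proof -
    have "cnd N k \<gamma> f t (\<beta>$i) i (z$i) = cnd N k \<gamma> f t (\<beta>$i) i (x$i)" if "\<beta> \<in> L" for \<beta> i
    proof -
      have "(N*k) dvd \<beta>$i" using dv that by blast
      then show ?thesis using cf_props(5)[OF N k, of \<gamma> i "\<beta>$i" f u "x$i" "z$i" t] g \<open>z \<in> bx u x\<close>
        \<open>t = u \<or> t = Suc u\<close> unfolding inbx cl_def by metis
    qed
    then show ?thesis unfolding H_def by auto
  qed
  have shape: "almost_k_box k (bx u x)" for u x
  proof -
    let ?s = "(\<chi> j. snd (cl u x j)) :: int ^ 'd"
    have b1: "\<forall>i. k \<le> ?s $ i \<and> ?s $ i \<le> 2 * k"
    proof
      fix i show "k \<le> ?s $ i \<and> ?s $ i \<le> 2 * k"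
        using cf_props(2)[OF N k, of \<gamma> i f u "x$i"] g by (simp add: cl_def)
    qed
    have "{i. ?s $ i \<noteq> k} \<subseteq> {i. f i = u}" 
    proof
      fix i assume "i \<in> {i. ?s $ i \<noteq> k}"
      then show "i \<in> {i. f i = u}" using cf_props(3)[OF N k, of \<gamma> i f u "x$i"] g by (auto simp: cl_def)
    qed
    moreover have "card {i. f i = u} \<le> 1"
      using finj by (auto simp: card_le_Suc0_iff_eq inj_def)
    ultimately have "card {i. ?s $ i \<noteq> k} \<le> 1"
      by (meson card_mono finite order_trans)
    then have "almost_k_shape k ?s" using b1 unfolding almost_k_shape_def by blast
    then show ?thesis unfolding almost_k_box_def bx_def by blast
  qed
  have uniq: "u = v" if "z \<in> H u" "z \<notin> H (Suc u)" "z \<in> H v" "z \<notin> H (Suc v)" for z u v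
  proof (rule ccontr)
    assume "u \<noteq> v"
    then have "Suc u \<le> v \<or> Suc v \<le> u" by linarith
    then show False using Hmono that by blast
  qed
  have "\<forall>P\<in>T. almost_k_box k P" unfolding T_def using shape by blast
  moreover have "pairwise disjnt T"
  proof (rule pairwiseI)
    fix P Q assume P: "P \<in> T" and Q: "Q \<in> T" and PQ: "P \<noteq> Q"
    obtain u x where Pu: "P = bx u x" "x \<in> H u" "x \<notin> H (Suc u)" using P unfolding T_def by blast
    obtain v y where Qv: "Q = bx v y" "y \<in> H v" "y \<notin> H (Suc v)" using Q unfolding T_def by blast
    show "disjnt P Q"
    proof (rule ccontr)
      assume "\<not> disjnt P Q"
      then obtain z where z: "z \<in> P" "z \<in> Q" unfolding disjnt_def by blast
      have z1: "z \<in> H u" "z \<notin> H (Suc u)" using Hresp[of z u x] z(1) Pu by auto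
      have z2: "z \<in> H v" "z \<notin> H (Suc v)" using Hresp[of z v y] z(2) Qv by auto
      have "u = v" using uniq z1 z2 by blast
      then have "P = Q" using same z Pu Qv by metis
      then show False using PQ by simp
    qed
  qed
  moreover have "\<Union>T = B - A"
  proof
    show "\<Union>T \<subseteq> B - A"
    proof
      fix z assume "z \<in> \<Union>T"
      then obtain u x where z: "z \<in> bx u x" "x \<in> H u" "x \<notin> H (Suc u)" unfolding T_def by blast
      have "z \<in> H u" "z \<notin> H (Suc u)" using Hresp[of z u x] z by auto
      then show "z \<in> B - A" using HB HA by blast
    qed
    show "B - A \<subseteq> \<Union>T"
    proof
      fix x assume x: "x \<in> B - A"
      then have "x \<in> H 0" "x \<notin> H n" using H0 Hn by auto
      then obtain u where "x \<in> H u" "x \<notin> H (Suc u)" using find_step[of "\<lambda>t. x \<in> H t" n] by blast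
      then have "bx u x \<in> T" unfolding T_def by blast
      then show "x \<in> \<Union>T" using memx by blast
    qed
  qed
  ultimately show ?thesis unfolding tiled_by_almost_k_boxes_def by blast
qed

end
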